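(* Let $m\ge1$ and let $C_k$ be the $\mathbb Z_2$-vector space with basis the $k$-element subsets of $\{1,\dots,2m\}$. Define $\partial_k\colon C_k\to C_{k-2}$ on basis elements by $\partial_k(\Delta)=\sum\Gamma$, the sum over all $(k-2)$-element subsets $\Gamma\subset\Delta$. Then $$\dim_{\mathbb Z_2}\ker\partial_{m+1}=\binom{2m}{m-1}-\sum_{i=0}^{m-1}2^{m-1-i}\binom{2i}{i}.$$
   Context: $\mathbb Z_2=\mathbb Z/2\mathbb Z$; $C_k=0$ for $k<0$. *)

theory Defs
  imports Complex_Main "HOL-Library.Z2" "HOL-Library.Function_Algebras"
begin

text \<open>Chains: Z_2-valued functions on subsets of nat, supported on the
  k-element subsets of {1..2m}.  A chain f stands for the formal sum of f D * D.\<close>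

definition scaleZ2 :: "bit \<Rightarrow> (nat set \<Rightarrow> bit) \<Rightarrow> (nat set \<Rightarrow> bit)" where
  "scaleZ2 c f = (\<lambda>S. c * f S)"

definition ksubsets :: "nat \<Rightarrow> nat \<Rightarrow> nat set set" where
  "ksubsets m k = {S. S \<subseteq> {1..2*m} \<and> card S = k}"

definition chains :: "nat \<Rightarrow> nat \<Rightarrow> (nat set \<Rightarrow> bit) set" where
  "chains m k = {f. \<forall>S. f S \<noteq> 0 \<longrightarrow> S \<in> ksubsets m k}"

definition basis_el :: "nat set \<Rightarrow> (nat set \<Rightarrow> bit)" where
  "basis_el D = (\<lambda>S. if S = D then 1 else 0)"

text \<open>Boundary on a basis element (k \<ge> 2; C_(k-2) = 0 for k < 2).\<close>
definition bd_basis :: "nat \<Rightarrow> nat set \<Rightarrow> (nat set \<Rightarrow> bit)" where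
  "bd_basis k D = (if k < 2 then 0 else
     (\<Sum>G\<in>{G. G \<subseteq> D \<and> card G = k - 2}. basis_el G))"

definition bd :: "nat \<Rightarrow> nat \<Rightarrow> (nat set \<Rightarrow> bit) \<Rightarrow> (nat set \<Rightarrow> bit)" where
  "bd m k f = (\<Sum>D\<in>ksubsets m k. scaleZ2 (f D) (bd_basis k D))"

definition ker_bd :: "nat \<Rightarrow> nat \<Rightarrow> (nat set \<Rightarrow> bit) set" where
  "ker_bd m k = {f \<in> chains m k. bd m k f = 0}"

end

theory Submission
  imports Defs "HOL-Library.FuncSet"
begin

lemma bit_add_self[simp]: "(x::bit) + x = 0"
  by (cases x) simp_all

definition upS :: "nat set \<Rightarrow> nat \<Rightarrow> nat set \<Rightarrow> nat set set" where
  "upS U j G = {D. G \<subseteq> D \<and> D \<subseteq> U \<and> card D = card G + j}"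

definition up :: "nat set \<Rightarrow> nat \<Rightarrow> (nat set \<Rightarrow> bit) \<Rightarrow> (nat set \<Rightarrow> bit)" where
  "up U j f = (\<lambda>G. \<Sum>D\<in>upS U j G. f D)"

lemma finite_upS: "finite U \<Longrightarrow> finite (upS U j G)"
  unfolding upS_def by (rule finite_subset[of _ "Pow U"]) auto

lemma up_notsub: "\<not> G \<subseteq> U \<Longrightarrow> up U j f G = 0"
proof -
  assume "\<not> G \<subseteq> U"
  then have "upS U j G = {}" unfolding upS_def by auto
  then show ?thesis unfolding up_def by simp
qed

lemma up_cong: "(\<And>X. X \<subseteq> U \<Longrightarrow> f X = g X) \<Longrightarrow> up U j f = up U j g"
  unfolding up_def upS_def by (intro ext sum.cong) auto

lemma up_add: "up U j (f + g) = up U j f + up U j g"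
  unfolding up_def by (simp add: sum.distrib fun_eq_iff del: add_bit_eq_xor)

lemma up_zero[simp]: "up U j 0 = 0"
  unfolding up_def by (simp add: fun_eq_iff)

lemma up_card: "(\<And>S. f S \<noteq> 0 \<Longrightarrow> card S = k) \<Longrightarrow> up U j f G \<noteq> 0 \<Longrightarrow> card G + j = k \<and> G \<subseteq> U"
proof -
  assume h: "\<And>S. f S \<noteq> 0 \<Longrightarrow> card S = k" and ne: "up U j f G \<noteq> 0"
  then obtain D where "D \<in> upS U j G" "f D \<noteq> 0" unfolding up_def
    by (meson sum.not_neutral_contains_not_neutral)
  then show ?thesis using h[of D] unfolding upS_def by auto
qed

lemma up0: "finite U \<Longrightarrow> up U 0 f G = (if G \<subseteq> U then f G else 0)"
proof (cases "G \<subseteq> U")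
  case True
  assume "finite U"
  have "D = G" if "G \<subseteq> D" "D \<subseteq> U" "card D = card G" for D
    using card_subset_eq[of D G] that \<open>finite U\<close> finite_subset by metis
  then have "upS U 0 G = {G}" unfolding upS_def using True by auto
  then show ?thesis using True unfolding up_def by simp
qed (simp add: up_notsub)

lemma card_between:
  assumes "finite D" "G \<subseteq> D"
  shows "card {H. G \<subseteq> H \<and> H \<subseteq> D \<and> card H = card G + i} = (card D - card G) choose i"
proof -
  have fG: "finite G" using assms finite_subset by blast
  have "bij_betw (\<lambda>H. H - G) {H. G \<subseteq> H \<and> H \<subseteq> D \<and> card H = card G + i} {B. B \<subseteq> D - G \<and> card B = i}"
  proof (rule bij_betw_byWitness[where f'="\<lambda>B. B \<union> G"])
    show "\<forall>a\<in>{H. G \<subseteq> H \<and> H \<subseteq> D \<and> card H = card G + i}. a - G \<union> G = a" by auto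
    show "\<forall>a'\<in>{B. B \<subseteq> D - G \<and> card B = i}. a' \<union> G - G = a'" by auto
    show "(\<lambda>H. H - G) ` {H. G \<subseteq> H \<and> H \<subseteq> D \<and> card H = card G + i} \<subseteq> {B. B \<subseteq> D - G \<and> card B = i}"
      using fG by (auto simp: card_Diff_subset)
    show "(\<lambda>B. B \<union> G) ` {B. B \<subseteq> D - G \<and> card B = i} \<subseteq> {H. G \<subseteq> H \<and> H \<subseteq> D \<and> card H = card G + i}"
    proof safe
      fix B assume B: "B \<subseteq> D - G"
      have fB: "finite B" using B assms(1) finite_subset by blast
      show "card (B \<union> G) = card G + card B"
        using B fB fG by (subst card_Un_disjoint) auto
    qed (use assms in auto)
  qed
  then have "card {H. G \<subseteq> H \<and> H \<subseteq> D \<and> card H = card G + i} = card {B. B \<subseteq> D - G \<and> card B = i}"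
    by (rule bij_betw_same_card)
  also have "\<dots> = card (D - G) choose i" using assms by (simp add: n_subsets)
  also have "card (D - G) = card D - card G" using assms fG by (simp add: card_Diff_subset)
  finally show ?thesis .
qed

lemma up_comp:
  assumes "finite U"
  shows "up U i (up U j f) G = of_nat ((i + j) choose i) * up U (i + j) f G"
proof (cases "G \<subseteq> U")
  case False then show ?thesis by (simp add: up_notsub)
next
  case True
  have fG: "finite G" using True assms finite_subset by blast
  have eq: "upS U j H = {D. D \<in> upS U (i+j) G \<and> H \<subseteq> D}" if "H \<in> upS U i G" for H
    using that unfolding upS_def by auto
  have "up U i (up U j f) G = (\<Sum>H\<in>upS U i G. \<Sum>D\<in>upS U j H. f D)" unfolding up_def by simp
  also have "\<dots> = (\<Sum>H\<in>upS U i G. \<Sum>D\<in>{D. D \<in> upS U (i+j) G \<and> H \<subseteq> D}. f D)"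
    by (rule sum.cong) (auto simp: eq)
  also have "\<dots> = (\<Sum>D\<in>upS U (i+j) G. \<Sum>H\<in>{H. H \<in> upS U i G \<and> H \<subseteq> D}. f D)"
    by (rule sum.swap_restrict) (auto simp: finite_upS assms)
  also have "\<dots> = (\<Sum>D\<in>upS U (i+j) G. of_nat ((i + j) choose i) * f D)"
  proof (rule sum.cong[OF refl])
    fix D assume D: "D \<in> upS U (i+j) G"
    have fD: "finite D" using D assms unfolding upS_def using finite_subset by blast
    have "{H. H \<in> upS U i G \<and> H \<subseteq> D} = {H. G \<subseteq> H \<and> H \<subseteq> D \<and> card H = card G + i}"
      using D unfolding upS_def by auto
    then have "card {H. H \<in> upS U i G \<and> H \<subseteq> D} = (i + j) choose i"
      using D fD by (simp add: card_between upS_def)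
    then show "(\<Sum>H\<in>{H. H \<in> upS U i G \<and> H \<subseteq> D}. f D) = of_nat ((i + j) choose i) * f D"
      by (simp del: add_bit_eq_xor mult_bit_eq_and)
  qed
  also have "\<dots> = of_nat ((i + j) choose i) * up U (i + j) f G"
    unfolding up_def by (simp add: sum_distrib_left del: add_bit_eq_xor mult_bit_eq_and)
  finally show ?thesis .
qed

lemma inj_insert_out: "inj_on (insert a) {Y. a \<notin> Y}"
  by (rule inj_onI) (metis Diff_insert_absorb mem_Collect_eq)

lemma L1:
  assumes U: "finite U" and a: "a \<notin> U" and G: "G \<subseteq> U"
  shows "up (insert a U) (Suc j) f G = up U (Suc j) f G + up U j (\<lambda>X. f (insert a X)) G"
proof -
  have fG: "finite G" using G U finite_subset by blast
  have seq: "upS (insert a U) (Suc j) G = upS U (Suc j) G \<union> insert a ` upS U j G"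
  proof (rule set_eqI, rule iffI)
    fix D assume D: "D \<in> upS (insert a U) (Suc j) G"
    then have fD: "finite D" using U unfolding upS_def using finite_subset by blast
    show "D \<in> upS U (Suc j) G \<union> insert a ` upS U j G"
    proof (cases "a \<in> D")
      case True
      have "D - {a} \<in> upS U j G" using D True a G fD unfolding upS_def by auto
      moreover have "D = insert a (D - {a})" using True by auto
      ultimately show ?thesis by blast
    next
      case False
      then show ?thesis using D unfolding upS_def by auto
    qed
  next
    fix D assume "D \<in> upS U (Suc j) G \<union> insert a ` upS U j G"
    then show "D \<in> upS (insert a U) (Suc j) G"
    proof
      assume "D \<in> upS U (Suc j) G" then show ?thesis unfolding upS_def by auto
    next
      assume "D \<in> insert a ` upS U j G"
      then obtain Y where Y: "Y \<in> upS U j G" "D = insert a Y" by blast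
      have "finite Y" "a \<notin> Y" using Y U a unfolding upS_def using finite_subset by auto
      then show ?thesis using Y unfolding upS_def by auto
    qed
  qed
  have disj: "upS U (Suc j) G \<inter> insert a ` upS U j G = {}" using a unfolding upS_def by auto
  have inj: "inj_on (insert a) (upS U j G)"
    by (rule inj_on_subset[OF inj_insert_out]) (use a in \<open>auto simp: upS_def\<close>)
  have "up (insert a U) (Suc j) f G = (\<Sum>D\<in>upS U (Suc j) G. f D) + (\<Sum>D\<in>insert a ` upS U j G. f D)"
    unfolding up_def seq by (rule sum.union_disjoint) (auto simp: finite_upS U disj)
  also have "(\<Sum>D\<in>insert a ` upS U j G. f D) = (\<Sum>Y\<in>upS U j G. f (insert a Y))"
    using sum.reindex[OF inj] by simp
  finally show ?thesis unfolding up_def by simp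
qed

lemma L2:
  assumes U: "finite U" and a: "a \<notin> U" and G: "G \<subseteq> U"
  shows "up (insert a U) j f (insert a G) = up U j (\<lambda>X. f (insert a X)) G"
proof -
  have fG: "finite G" using G U finite_subset by blast
  have aG: "a \<notin> G" using a G by auto
  have seq: "upS (insert a U) j (insert a G) = insert a ` upS U j G"
  proof (rule set_eqI, rule iffI)
    fix D assume D: "D \<in> upS (insert a U) j (insert a G)"
    then have fD: "finite D" using U unfolding upS_def using finite_subset by blast
    have "D - {a} \<in> upS U j G" using D a G fD fG aG unfolding upS_def by auto
    moreover have "D = insert a (D - {a})" using D unfolding upS_def by auto
    ultimately show "D \<in> insert a ` upS U j G" by blast
  next
    fix D assume "D \<in> insert a ` upS U j G"
    then obtain Y where Y: "Y \<in> upS U j G" "D = insert a Y" by blast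
    have "finite Y" "a \<notin> Y" using Y U a unfolding upS_def using finite_subset by auto
    then show "D \<in> upS (insert a U) j (insert a G)" using Y fG aG unfolding upS_def by auto
  qed
  have inj: "inj_on (insert a) (upS U j G)"
    by (rule inj_on_subset[OF inj_insert_out]) (use a in \<open>auto simp: upS_def\<close>)
  show ?thesis unfolding up_def seq using sum.reindex[OF inj] by simp
qed

lemma DD: "finite U \<Longrightarrow> up U 1 (up U 1 f) = 0"
  by (rule ext) (simp add: up_comp del: add_bit_eq_xor mult_bit_eq_and)

lemma DD': "finite U \<Longrightarrow> up U (Suc 0) (up U (Suc 0) f) = 0"
  using DD by simp

lemma PP: "finite U \<Longrightarrow> up U 2 (up U 2 f) = 0"
proof (rule ext)
  fix G assume "finite U"
  have "(4::nat) choose 2 = 6" by code_simp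
  then show "up U 2 (up U 2 f) G = 0 G" using \<open>finite U\<close> by (simp add: up_comp del: add_bit_eq_xor mult_bit_eq_and)
qed

lemma DP: "finite U \<Longrightarrow> up U 1 (up U 2 f) = up U 2 (up U 1 f)"
proof (rule ext)
  fix G assume "finite U"
  have "(3::nat) choose 2 = 3" "(3::nat) choose 1 = 3" by code_simp+
  then show "up U 1 (up U 2 f) G = up U 2 (up U 1 f) G" using \<open>finite U\<close> up_comp[of U 1 2 f G] up_comp[of U 2 1 f G]
    by (simp add: numeral_3_eq_3 del: add_bit_eq_xor mult_bit_eq_and)
qed

declare add_bit_eq_xor[simp del] mult_bit_eq_and[simp del]

lemma bit_add_self2[simp]: "(x::bit) + (x + y) = y"
  by (simp add: add.assoc[symmetric])

lemma bit_add_eq0: "((x::bit) + y = 0) = (x = y)"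
  by (cases x; cases y) simp_all

lemma up_add_pt: "up U j (f + g) G = up U j f G + up U j g G"
  by (simp add: up_add)

lemma E1:
  assumes U: "finite U" and a: "a \<notin> U" and b: "b \<notin> U" and ab: "a \<noteq> b" and G: "G \<subseteq> U"
  shows "up (insert a (insert b U)) 2 f G = up U 2 f G + up U 1 (\<lambda>X. f (insert b X)) G
           + up U 1 (\<lambda>X. f (insert a X)) G + f (insert a (insert b G))"
proof -
  have U1: "finite (insert b U)" "a \<notin> insert b U" "G \<subseteq> insert b U" using U a ab G by auto
  have h1: "up (insert a (insert b U)) (Suc (Suc 0)) f G = up (insert b U) (Suc (Suc 0)) f G + up (insert b U) (Suc 0) (\<lambda>X. f (insert a X)) G"
    by (rule L1[OF U1])
  have h2: "up (insert b U) (Suc (Suc 0)) f G = up U (Suc (Suc 0)) f G + up U (Suc 0) (\<lambda>X. f (insert b X)) G"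
    by (rule L1[OF U b G])
  have h3: "up (insert b U) (Suc 0) (\<lambda>X. f (insert a X)) G = up U (Suc 0) (\<lambda>X. f (insert a X)) G + up U 0 (\<lambda>X. f (insert a (insert b X))) G"
    by (rule L1[OF U b G])
  show ?thesis using h1 h2 h3 G U by (simp add: up0 add.assoc numeral_2_eq_2)
qed

lemma E2:
  assumes U: "finite U" and a: "a \<notin> U" and b: "b \<notin> U" and ab: "a \<noteq> b" and G: "G \<subseteq> U"
  shows "up (insert a (insert b U)) 2 f (insert a G) = up U 2 (\<lambda>X. f (insert a X)) G
           + up U 1 (\<lambda>X. f (insert a (insert b X))) G"
proof -
  have U1: "finite (insert b U)" "a \<notin> insert b U" "G \<subseteq> insert b U" using U a ab G by auto
  have h1: "up (insert a (insert b U)) 2 f (insert a G) = up (insert b U) 2 (\<lambda>X. f (insert a X)) G"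
    by (rule L2[OF U1])
  have h2: "up (insert b U) (Suc (Suc 0)) (\<lambda>X. f (insert a X)) G = up U (Suc (Suc 0)) (\<lambda>X. f (insert a X)) G + up U (Suc 0) (\<lambda>X. f (insert a (insert b X))) G"
    by (rule L1[OF U b G])
  show ?thesis using h1 h2 by (simp add: numeral_2_eq_2)
qed

lemma E3:
  assumes U: "finite U" and a: "a \<notin> U" and b: "b \<notin> U" and ab: "a \<noteq> b" and G: "G \<subseteq> U"
  shows "up (insert a (insert b U)) 2 f (insert b G) = up U 2 (\<lambda>X. f (insert b X)) G
           + up U 1 (\<lambda>X. f (insert a (insert b X))) G"
proof -
  have U1: "finite (insert b U)" "a \<notin> insert b U" "insert b G \<subseteq> insert b U" using U a ab G by auto
  have h1: "up (insert a (insert b U)) (Suc (Suc 0)) f (insert b G) = up (insert b U) (Suc (Suc 0)) f (insert b G) + up (insert b U) (Suc 0) (\<lambda>X. f (insert a X)) (insert b G)"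
    by (rule L1[OF U1])
  have h2: "up (insert b U) (Suc (Suc 0)) f (insert b G) = up U (Suc (Suc 0)) (\<lambda>X. f (insert b X)) G"
    by (rule L2[OF U b G])
  have h3: "up (insert b U) (Suc 0) (\<lambda>X. f (insert a X)) (insert b G) = up U (Suc 0) (\<lambda>X. f (insert a (insert b X))) G"
    by (rule L2[OF U b G])
  show ?thesis using h1 h2 h3 by (simp add: numeral_2_eq_2)
qed

lemma E4:
  assumes U: "finite U" and a: "a \<notin> U" and b: "b \<notin> U" and ab: "a \<noteq> b" and G: "G \<subseteq> U"
  shows "up (insert a (insert b U)) 2 f (insert a (insert b G)) = up U 2 (\<lambda>X. f (insert a (insert b X))) G"
proof -
  have U1: "finite (insert b U)" "a \<notin> insert b U" "insert b G \<subseteq> insert b U" using U a ab G by auto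
  have "up (insert a (insert b U)) 2 f (insert a (insert b G)) = up (insert b U) 2 (\<lambda>X. f (insert a X)) (insert b G)"
    by (rule L2[OF U1])
  also have "\<dots> = up U 2 (\<lambda>X. f (insert a (insert b X))) G"
    by (rule L2[OF U b G])
  finally show ?thesis .
qed

lemma ker_char:
  assumes U: "finite U" and a: "a \<notin> U" and b: "b \<notin> U" and ab: "a \<noteq> b"
  shows "(up (insert a (insert b U)) 2 f = 0) \<longleftrightarrow>
    (\<forall>G. G \<subseteq> U \<longrightarrow>
       up U 2 f G + up U 1 (\<lambda>X. f (insert b X)) G + up U 1 (\<lambda>X. f (insert a X)) G + f (insert a (insert b G)) = 0
     \<and> up U 2 (\<lambda>X. f (insert a X)) G + up U 1 (\<lambda>X. f (insert a (insert b X))) G = 0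
     \<and> up U 2 (\<lambda>X. f (insert b X)) G + up U 1 (\<lambda>X. f (insert a (insert b X))) G = 0
     \<and> up U 2 (\<lambda>X. f (insert a (insert b X))) G = 0)"
  (is "?L \<longleftrightarrow> ?R")
proof
  assume L: ?L
  show ?R
  proof (intro allI impI)
    fix G assume G: "G \<subseteq> U"
    show "up U 2 f G + up U 1 (\<lambda>X. f (insert b X)) G + up U 1 (\<lambda>X. f (insert a X)) G + f (insert a (insert b G)) = 0
     \<and> up U 2 (\<lambda>X. f (insert a X)) G + up U 1 (\<lambda>X. f (insert a (insert b X))) G = 0
     \<and> up U 2 (\<lambda>X. f (insert b X)) G + up U 1 (\<lambda>X. f (insert a (insert b X))) G = 0
     \<and> up U 2 (\<lambda>X. f (insert a (insert b X))) G = 0"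
      using fun_cong[OF L, of G] fun_cong[OF L, of "insert a G"] fun_cong[OF L, of "insert b G"]
        fun_cong[OF L, of "insert a (insert b G)"]
        E1[OF assms G, of f] E2[OF assms G, of f] E3[OF assms G, of f] E4[OF assms G, of f]
      by simp
  qed
next
  assume R: ?R
  show ?L
  proof (rule ext)
    fix G
    show "up (insert a (insert b U)) 2 f G = 0 G"
    proof (cases "G \<subseteq> insert a (insert b U)")
      case False then show ?thesis by (simp add: up_notsub)
    next
      case True
      define G0 where "G0 = G - {a, b}"
      have G0: "G0 \<subseteq> U" using True unfolding G0_def by auto
      have aG0: "a \<notin> G0" "b \<notin> G0" unfolding G0_def by auto
      consider "a \<notin> G" "b \<notin> G" | "a \<in> G" "b \<notin> G" | "a \<notin> G" "b \<in> G" | "a \<in> G" "b \<in> G" by blast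
      then show ?thesis
      proof cases
        case 1 then have "G = G0" unfolding G0_def by auto
        then show ?thesis using R G0 E1[OF assms G0, of f] by simp
      next
        case 2 then have "G = insert a G0" unfolding G0_def by auto
        then show ?thesis using R G0 E2[OF assms G0, of f] by simp
      next
        case 3 then have "G = insert b G0" unfolding G0_def by auto
        then show ?thesis using R G0 E3[OF assms G0, of f] by simp
      next
        case 4 then have "G = insert a (insert b G0)" unfolding G0_def by auto
        then show ?thesis using R G0 E4[OF assms G0, of f] by simp
      qed
    qed
  qed
qed

lemma DP': "finite U \<Longrightarrow> up U (Suc 0) (up U 2 f) = up U 2 (up U (Suc 0) f)"
  using DP by simp

definition chU :: "nat set \<Rightarrow> nat \<Rightarrow> (nat set \<Rightarrow> bit) set" where
  "chU U k = {f. \<forall>S. f S \<noteq> 0 \<longrightarrow> S \<subseteq> U \<and> card S = k}"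

definition KU :: "nat set \<Rightarrow> nat \<Rightarrow> (nat set \<Rightarrow> bit) set" where
  "KU U k = {f \<in> chU U k. up U 2 f = 0}"

definition res :: "nat set \<Rightarrow> (nat set \<Rightarrow> bit) \<Rightarrow> (nat set \<Rightarrow> bit)" where
  "res U g = (\<lambda>X. if X \<subseteq> U then g X else 0)"

lemma res_in: "X \<subseteq> U \<Longrightarrow> res U g X = g X" by (simp add: res_def)
lemma res_out: "\<not> X \<subseteq> U \<Longrightarrow> res U g X = 0" by (simp add: res_def)

lemma up_res[simp]: "up U j (res U g) = up U j g"
  by (rule up_cong) (simp add: res_def)

lemma ker_facts:
  assumes U: "finite U" and a: "a \<notin> U" and b: "b \<notin> U" and ab: "a \<noteq> b"
    and K: "up (insert a (insert b U)) 2 f = 0" and G: "G \<subseteq> U"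
  shows "f (insert a (insert b G)) = up U 2 f G + up U 1 (\<lambda>X. f (insert b X)) G + up U 1 (\<lambda>X. f (insert a X)) G"
    and "up U 2 (\<lambda>X. f (insert a X)) G = up U 1 (\<lambda>X. f (insert a (insert b X))) G"
    and "up U 2 (\<lambda>X. f (insert b X)) G = up U 1 (\<lambda>X. f (insert a (insert b X))) G"
    and "up U 2 (\<lambda>X. f (insert a (insert b X))) G = 0"
  using K G unfolding ker_char[OF U a b ab] by (auto simp: bit_add_eq0)

lemma comp2:
  assumes U: "finite U" and a: "a \<notin> U" and b: "b \<notin> U" and ab: "a \<noteq> b"
    and f: "f \<in> KU (insert a (insert b U)) k"
  shows "res U (\<lambda>X. f (insert a X)) + up U 1 f \<in> KU U (k - 1)"
proof -
  have ch: "f S \<noteq> 0 \<Longrightarrow> S \<subseteq> insert a (insert b U) \<and> card S = k" for S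
    using f unfolding KU_def chU_def by auto
  have K: "up (insert a (insert b U)) 2 f = 0" using f unfolding KU_def by auto
  note kf = ker_facts[OF U a b ab K]
  let ?fa = "\<lambda>X. f (insert a X)" and ?fb = "\<lambda>X. f (insert b X)" and ?fab = "\<lambda>X. f (insert a (insert b X))"
  have Dfab: "up U 1 ?fab = up U 1 (up U 2 f)"
  proof -
    have "up U 1 ?fab = up U 1 (up U 2 f + up U 1 ?fb + up U 1 ?fa)"
      by (rule up_cong) (simp add: kf(1))
    also have "\<dots> = up U 1 (up U 2 f)" by (simp add: up_add DD[OF U] DD'[OF U])
    finally show ?thesis .
  qed
  have chain: "res U ?fa + up U 1 f \<in> chU U (k - 1)"
    unfolding chU_def
  proof (intro CollectI allI impI)
    fix S assume ne: "(res U ?fa + up U 1 f) S \<noteq> 0"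
    then consider "res U ?fa S \<noteq> 0" | "up U 1 f S \<noteq> 0" by fastforce
    then show "S \<subseteq> U \<and> card S = k - 1"
    proof cases
      case 1
      then have S: "S \<subseteq> U" "f (insert a S) \<noteq> 0" unfolding res_def by (auto split: if_splits)
      have "finite S" "a \<notin> S" using S U a finite_subset by auto
      then show ?thesis using ch[OF S(2)] S by auto
    next
      case 2
      then show ?thesis using up_card[of f k U 1 S] ch by force
    qed
  qed
  have "up U 2 (res U ?fa + up U 1 f) = 0"
  proof (rule ext)
    fix G
    show "up U 2 (res U ?fa + up U 1 f) G = 0 G"
    proof (cases "G \<subseteq> U")
      case False then show ?thesis by (simp add: up_notsub)
    next
      case True
      have "up U 2 (res U ?fa + up U 1 f) G = up U 2 ?fa G + up U 1 (up U 2 f) G"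
        by (simp add: up_add_pt DP[OF U] DP'[OF U])
      also have "\<dots> = up U 1 ?fab G + up U 1 ?fab G" using kf(2)[OF True] Dfab by simp
      finally show ?thesis by simp
    qed
  qed
  then show ?thesis using chain unfolding KU_def by auto
qed

lemma bit_sum_ne: "(x::bit) + y \<noteq> 0 \<Longrightarrow> x \<noteq> 0 \<or> y \<noteq> 0"
  by auto

definition psi :: "nat set \<Rightarrow> nat \<Rightarrow> nat \<Rightarrow> (nat set \<Rightarrow> bit) \<Rightarrow> (nat set \<Rightarrow> bit) \<Rightarrow> (nat set \<Rightarrow> bit) \<Rightarrow> (nat set \<Rightarrow> bit)" where
 "psi U a b p q0 r0 = (\<lambda>X. if X \<subseteq> U then p X
    else if a \<in> X \<and> b \<notin> X \<and> X - {a} \<subseteq> U then q0 (X - {a}) + up U 1 p (X - {a})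
    else if b \<in> X \<and> a \<notin> X \<and> X - {b} \<subseteq> U then r0 (X - {b}) + up U 1 p (X - {b})
    else if a \<in> X \<and> b \<in> X \<and> X - {a,b} \<subseteq> U then up U 2 p (X - {a,b}) + up U 1 q0 (X - {a,b}) + up U 1 r0 (X - {a,b})
    else 0)"

context
  fixes U :: "nat set" and a b :: nat
  assumes U: "finite U" and a: "a \<notin> U" and b: "b \<notin> U" and ab: "a \<noteq> b"
begin

lemma psi0: "X \<subseteq> U \<Longrightarrow> psi U a b p q0 r0 X = p X"
  unfolding psi_def by simp

lemma psia: "X \<subseteq> U \<Longrightarrow> psi U a b p q0 r0 (insert a X) = q0 X + up U 1 p X"
proof -
  assume X: "X \<subseteq> U"
  then have "a \<notin> X" "b \<notin> X" using a b by auto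
  then have "insert a X - {a} = X" by auto
  then show ?thesis unfolding psi_def using X a ab \<open>b \<notin> X\<close> by auto
qed

lemma psib: "X \<subseteq> U \<Longrightarrow> psi U a b p q0 r0 (insert b X) = r0 X + up U 1 p X"
proof -
  assume X: "X \<subseteq> U"
  then have "a \<notin> X" "b \<notin> X" using a b by auto
  then have "insert b X - {b} = X" by auto
  then show ?thesis unfolding psi_def using X b ab \<open>a \<notin> X\<close> by auto
qed

lemma psiab: "X \<subseteq> U \<Longrightarrow> psi U a b p q0 r0 (insert a (insert b X)) = up U 2 p X + up U 1 q0 X + up U 1 r0 X"
proof -
  assume X: "X \<subseteq> U"
  then have "a \<notin> X" "b \<notin> X" using a b by auto
  then have "insert a (insert b X) - {a, b} = X" by auto
  then show ?thesis unfolding psi_def using X a b ab by auto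
qed

lemma psi_out: "\<not> X \<subseteq> insert a (insert b U) \<Longrightarrow> psi U a b p q0 r0 X = 0"
  unfolding psi_def by auto

lemma split4:
  assumes "X \<subseteq> insert a (insert b U)"
  obtains G where "G \<subseteq> U" "X = G" | G where "G \<subseteq> U" "X = insert a G"
    | G where "G \<subseteq> U" "X = insert b G" | G where "G \<subseteq> U" "X = insert a (insert b G)"
proof -
  define G0 where "G0 = X - {a, b}"
  have G0: "G0 \<subseteq> U" using assms unfolding G0_def by auto
  consider "a \<notin> X" "b \<notin> X" | "a \<in> X" "b \<notin> X" | "a \<notin> X" "b \<in> X" | "a \<in> X" "b \<in> X" by blast
  then show ?thesis
  proof cases
    case 1 then have "X = G0" unfolding G0_def by auto
    then show ?thesis using that G0 by blast
  next
    case 2 then have "X = insert a G0" unfolding G0_def by auto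
    then show ?thesis using that G0 by blast
  next
    case 3 then have "X = insert b G0" unfolding G0_def by auto
    then show ?thesis using that G0 by blast
  next
    case 4 then have "X = insert a (insert b G0)" unfolding G0_def by auto
    then show ?thesis using that G0 by blast
  qed
qed

lemma fin_sub: "X \<subseteq> U \<Longrightarrow> finite X \<and> a \<notin> X \<and> b \<notin> X"
  using U a b finite_subset by blast

lemma psi_in:
  assumes k: "k \<ge> 2" and p: "p \<in> chU U k" and q0: "q0 \<in> KU U (k - 1)" and r0: "r0 \<in> KU U (k - 1)"
  shows "psi U a b p q0 r0 \<in> KU (insert a (insert b U)) k"
proof -
  let ?f = "psi U a b p q0 r0"
  have chp: "p S \<noteq> 0 \<Longrightarrow> S \<subseteq> U \<and> card S = k" for S using p unfolding chU_def by auto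
  have chq: "q0 S \<noteq> 0 \<Longrightarrow> S \<subseteq> U \<and> card S = k - 1" for S using q0 unfolding KU_def chU_def by auto
  have chr: "r0 S \<noteq> 0 \<Longrightarrow> S \<subseteq> U \<and> card S = k - 1" for S using r0 unfolding KU_def chU_def by auto
  have Kq: "up U 2 q0 = 0" and Kr: "up U 2 r0 = 0" using q0 r0 unfolding KU_def by auto
  have cp: "up U j p G \<noteq> 0 \<Longrightarrow> card G + j = k" for j G using up_card[of p k U j G] chp by blast
  have cq: "up U j q0 G \<noteq> 0 \<Longrightarrow> card G + j = k - 1" for j G using up_card[of q0 "k-1" U j G] chq by blast
  have cr: "up U j r0 G \<noteq> 0 \<Longrightarrow> card G + j = k - 1" for j G using up_card[of r0 "k-1" U j G] chr by blast
  have chain: "?f \<in> chU (insert a (insert b U)) k"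
    unfolding chU_def
  proof (intro CollectI allI impI)
    fix S assume ne: "?f S \<noteq> 0"
    then have SU: "S \<subseteq> insert a (insert b U)" using psi_out by blast
    then show "S \<subseteq> insert a (insert b U) \<and> card S = k"
    proof (cases rule: split4)
      case (1 G) then show ?thesis using ne chp SU by (simp add: psi0)
    next
      case (2 G)
      then have "q0 G + up U 1 p G \<noteq> 0" using ne by (simp add: psia)
      from bit_sum_ne[OF this] have "card G + 1 = k" using chq[of G] cp[of 1 G] k by auto
      then show ?thesis using 2 fin_sub[of G] by auto
    next
      case (3 G)
      then have "r0 G + up U 1 p G \<noteq> 0" using ne by (simp add: psib)
      from bit_sum_ne[OF this] have "card G + 1 = k" using chr[of G] cp[of 1 G] k by auto
      then show ?thesis using 3 fin_sub[of G] by auto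
    next
      case (4 G)
      then have "up U 2 p G + up U 1 q0 G + up U 1 r0 G \<noteq> 0" using ne by (simp add: psiab)
      then consider "up U 2 p G \<noteq> 0" | "up U 1 q0 G \<noteq> 0" | "up U 1 r0 G \<noteq> 0"
        using bit_sum_ne by blast
      then have "card G + 2 = k" using cq[of 1 G] cr[of 1 G] cp[of 2 G] k by cases auto
      then show ?thesis using 4 fin_sub[of G] ab by auto
    qed
  qed
  have e0: "up U j ?f = up U j p" for j by (rule up_cong) (simp add: psi0)
  have ea: "up U j (\<lambda>X. ?f (insert a X)) = up U j (q0 + up U 1 p)" for j by (rule up_cong) (simp add: psia)
  have eb: "up U j (\<lambda>X. ?f (insert b X)) = up U j (r0 + up U 1 p)" for j by (rule up_cong) (simp add: psib)
  have eab: "up U j (\<lambda>X. ?f (insert a (insert b X))) = up U j (up U 2 p + up U 1 q0 + up U 1 r0)" for j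
    by (rule up_cong) (simp add: psiab)
  have PDq: "up U 2 (up U (Suc 0) q0) = 0" using DP'[OF U, of q0] Kq by simp
  have PDr: "up U 2 (up U (Suc 0) r0) = 0" using DP'[OF U, of r0] Kr by simp
  have "up (insert a (insert b U)) 2 ?f = 0"
    unfolding ker_char[OF U a b ab] e0 ea eb eab
    by (simp add: up_add_pt psiab DD'[OF U] DP'[OF U] PP[OF U] Kq Kr PDq PDr add.assoc add.left_commute)
  then show ?thesis using chain unfolding KU_def by auto
qed


lemma psi_phi:
  assumes f: "f \<in> KU (insert a (insert b U)) k"
  shows "psi U a b (res U f) (res U (\<lambda>X. f (insert a X)) + up U 1 f) (res U (\<lambda>X. f (insert b X)) + up U 1 f) = f"
proof (rule ext)
  fix X
  have ch: "f S \<noteq> 0 \<Longrightarrow> S \<subseteq> insert a (insert b U) \<and> card S = k" for S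
    using f unfolding KU_def chU_def by auto
  have K: "up (insert a (insert b U)) 2 f = 0" using f unfolding KU_def by auto
  note kf = ker_facts[OF U a b ab K]
  show "psi U a b (res U f) (res U (\<lambda>X. f (insert a X)) + up U 1 f) (res U (\<lambda>X. f (insert b X)) + up U 1 f) X = f X"
  proof (cases "X \<subseteq> insert a (insert b U)")
    case False then show ?thesis using psi_out ch by fastforce
  next
    case True
    then show ?thesis
    proof (cases rule: split4)
      case (1 G) then show ?thesis by (simp add: psi0 res_in res_out)
    next
      case (2 G) then show ?thesis by (simp add: psia res_in res_out up_add_pt)
    next
      case (3 G) then show ?thesis by (simp add: psib res_in res_out up_add_pt)
    next
      case (4 G) then show ?thesis
        by (simp add: psiab res_in res_out up_add_pt DD[OF U] DD'[OF U] kf(1) add.assoc add.left_commute)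
    qed
  qed
qed

lemma phi_psi:
  assumes p: "p \<in> chU U k" and q0: "q0 \<in> KU U (k - 1)" and r0: "r0 \<in> KU U (k - 1)"
  defines "f \<equiv> psi U a b p q0 r0"
  shows "(res U f, res U (\<lambda>X. f (insert a X)) + up U 1 f, res U (\<lambda>X. f (insert b X)) + up U 1 f) = (p, q0, r0)"
proof -
  have chp: "\<not> S \<subseteq> U \<Longrightarrow> p S = 0" for S using p unfolding chU_def by blast
  have chq: "\<not> S \<subseteq> U \<Longrightarrow> q0 S = 0" for S using q0 unfolding KU_def chU_def by blast
  have chr: "\<not> S \<subseteq> U \<Longrightarrow> r0 S = 0" for S using r0 unfolding KU_def chU_def by blast
  have e0: "up U j f = up U j p" for j unfolding f_def by (rule up_cong) (simp add: psi0)
  have "res U f = p"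
  proof fix X show "res U f X = p X" by (cases "X \<subseteq> U") (simp_all add: res_in res_out f_def psi0 chp) qed
  moreover have "res U (\<lambda>X. f (insert a X)) + up U 1 f = q0"
  proof fix X show "(res U (\<lambda>X. f (insert a X)) + up U 1 f) X = q0 X"
      by (cases "X \<subseteq> U") (simp_all add: res_in res_out f_def psia chq e0[unfolded f_def] up_notsub) qed
  moreover have "res U (\<lambda>X. f (insert b X)) + up U 1 f = r0"
  proof fix X show "(res U (\<lambda>X. f (insert b X)) + up U 1 f) X = r0 X"
      by (cases "X \<subseteq> U") (simp_all add: res_in res_out f_def psib chr e0[unfolded f_def] up_notsub) qed
  ultimately show ?thesis by simp
qed


lemma card_step:
  assumes k: "k \<ge> 2"
  shows "card (KU (insert a (insert b U)) k) = card (chU U k) * (card (KU U (k - 1)) * card (KU U (k - 1)))"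
proof -
  define phi where "phi f = (res U f, res U (\<lambda>X. f (insert a X)) + up U 1 f, res U (\<lambda>X. f (insert b X)) + up U 1 f)" for f
  have "bij_betw phi (KU (insert a (insert b U)) k) (chU U k \<times> KU U (k - 1) \<times> KU U (k - 1))"
  proof (rule bij_betw_byWitness[where f'="\<lambda>(p, q0, r0). psi U a b p q0 r0"])
    show "\<forall>f\<in>KU (insert a (insert b U)) k. (\<lambda>(p, q0, r0). psi U a b p q0 r0) (phi f) = f"
      using psi_phi unfolding phi_def by auto
    show "\<forall>t\<in>chU U k \<times> KU U (k - 1) \<times> KU U (k - 1). phi ((\<lambda>(p, q0, r0). psi U a b p q0 r0) t) = t"
      using phi_psi unfolding phi_def by auto
    show "(\<lambda>(p, q0, r0). psi U a b p q0 r0) ` (chU U k \<times> KU U (k - 1) \<times> KU U (k - 1)) \<subseteq> KU (insert a (insert b U)) k"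
      using psi_in[OF k] by auto
    show "phi ` KU (insert a (insert b U)) k \<subseteq> chU U k \<times> KU U (k - 1) \<times> KU U (k - 1)"
    proof (rule image_subsetI)
      fix f assume f: "f \<in> KU (insert a (insert b U)) k"
      have "res U f \<in> chU U k" using f unfolding KU_def chU_def res_def by auto
      moreover have "res U (\<lambda>X. f (insert a X)) + up U 1 f \<in> KU U (k - 1)"
        by (rule comp2[OF U a b ab f])
      moreover have "f \<in> KU (insert b (insert a U)) k" using f by (simp add: insert_commute)
      then have "res U (\<lambda>X. f (insert b X)) + up U 1 f \<in> KU U (k - 1)"
        by (rule comp2[OF U b a ab[symmetric]])
      ultimately show "phi f \<in> chU U k \<times> KU U (k - 1) \<times> KU U (k - 1)"
        unfolding phi_def by auto
    qed
  qed
  then show ?thesis by (simp add: bij_betw_same_card card_cartesian_product)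
qed

end


interpretation Z: vector_space scaleZ2
  by unfold_locales (auto simp: scaleZ2_def fun_eq_iff algebra_simps)

lemma card_span_Z:
  assumes "finite B" "Z.independent B"
  shows "card (Z.span B) = 2 ^ card B"
  using assms
proof (induction B rule: finite_induct)
  case empty
  then show ?case by simp
next
  case (insert b B)
  have indB: "Z.independent B" and nb: "b \<notin> Z.span B"
    using insert.prems insert.hyps Z.independent_insert by auto
  have IH: "card (Z.span B) = 2 ^ card B" using insert.IH indB by simp
  have fin: "finite (Z.span B)" using IH by (metis card.infinite power_not_zero zero_neq_numeral)
  have sc: "scaleZ2 k b = (if k = 0 then 0 else b)" for k
    by (cases k) (auto simp: scaleZ2_def fun_eq_iff)
  have eq: "Z.span (insert b B) = Z.span B \<union> (\<lambda>y. y + b) ` Z.span B"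
  proof (rule set_eqI)
    fix x
    have "x \<in> Z.span (insert b B) \<longleftrightarrow> (\<exists>k. x - scaleZ2 k b \<in> Z.span B)"
      by (simp add: Z.span_insert)
    also have "\<dots> \<longleftrightarrow> x \<in> Z.span B \<or> x - b \<in> Z.span B"
    proof
      assume "\<exists>k. x - scaleZ2 k b \<in> Z.span B"
      then obtain k where "x - scaleZ2 k b \<in> Z.span B" by blast
      then show "x \<in> Z.span B \<or> x - b \<in> Z.span B" by (cases "k = 0") (simp_all add: sc)
    next
      assume "x \<in> Z.span B \<or> x - b \<in> Z.span B"
      then show "\<exists>k. x - scaleZ2 k b \<in> Z.span B"
      proof
        assume "x \<in> Z.span B" then show ?thesis by (intro exI[of _ 0]) (simp add: sc)
      next
        assume "x - b \<in> Z.span B" then show ?thesis by (intro exI[of _ 1]) (simp add: sc)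
      qed
    qed
    also have "\<dots> \<longleftrightarrow> x \<in> Z.span B \<union> (\<lambda>y. y + b) ` Z.span B"
    proof
      assume "x \<in> Z.span B \<or> x - b \<in> Z.span B"
      then show "x \<in> Z.span B \<union> (\<lambda>y. y + b) ` Z.span B"
      proof
        assume "x - b \<in> Z.span B"
        then have "(x - b) + b \<in> (\<lambda>y. y + b) ` Z.span B" by blast
        then show ?thesis by simp
      qed simp
    next
      assume "x \<in> Z.span B \<union> (\<lambda>y. y + b) ` Z.span B"
      then show "x \<in> Z.span B \<or> x - b \<in> Z.span B" by auto
    qed
    finally show "x \<in> Z.span (insert b B) \<longleftrightarrow> x \<in> Z.span B \<union> (\<lambda>y. y + b) ` Z.span B" .
  qed
  have disj: "Z.span B \<inter> (\<lambda>y. y + b) ` Z.span B = {}"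
  proof (rule ccontr)
    assume "Z.span B \<inter> (\<lambda>y. y + b) ` Z.span B \<noteq> {}"
    then obtain y where y: "y \<in> Z.span B" "y + b \<in> Z.span B" by auto
    then have "(y + b) - y \<in> Z.span B" by (intro Z.span_diff)
    then show False using nb by simp
  qed
  have inj: "inj_on (\<lambda>y. y + b) (Z.span B)" by (rule inj_onI) simp
  have "card (Z.span (insert b B)) = card (Z.span B) + card ((\<lambda>y. y + b) ` Z.span B)"
    unfolding eq by (rule card_Un_disjoint) (use fin disj in auto)
  also have "card ((\<lambda>y. y + b) ` Z.span B) = card (Z.span B)" by (rule card_image[OF inj])
  finally show ?case using IH insert.hyps by simp
qed

lemma card_subspace_Z:
  assumes "Z.subspace V" "finite V"
  shows "card V = 2 ^ Z.dim V"
proof -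
  obtain B where B: "B \<subseteq> V" "Z.independent B" "V \<subseteq> Z.span B" "card B = Z.dim V"
    by (rule Z.basis_exists)
  have "Z.span B \<subseteq> V" using B(1) assms(1) by (rule Z.span_minimal)
  then have "Z.span B = V" using B(3) by auto
  moreover have "finite B" using B(1) assms(2) finite_subset by blast
  ultimately show ?thesis using card_span_Z[of B] B by simp
qed

lemma sum_fun_apply: "(\<Sum>x\<in>A. g x) y = (\<Sum>x\<in>A. g x y)"
  by (induction A rule: infinite_finite_induct) auto

lemma card_supp:
  assumes "finite A"
  shows "card {f :: 'a \<Rightarrow> bit. \<forall>x. x \<notin> A \<longrightarrow> f x = 0} = 2 ^ card A"
proof -
  have "bij_betw (\<lambda>f. restrict f A) {f :: 'a \<Rightarrow> bit. \<forall>x. x \<notin> A \<longrightarrow> f x = 0} (PiE A (\<lambda>_. UNIV))"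
  proof (rule bij_betw_byWitness[where f'="\<lambda>g x. if x \<in> A then g x else 0"])
    show "\<forall>a\<in>{f :: 'a \<Rightarrow> bit. \<forall>x. x \<notin> A \<longrightarrow> f x = 0}. (\<lambda>x. if x \<in> A then restrict a A x else 0) = a"
      by (auto simp: fun_eq_iff)
    show "\<forall>a'\<in>PiE A (\<lambda>_. UNIV). restrict (\<lambda>x. if x \<in> A then a' x else 0) A = a'"
      by (auto simp: fun_eq_iff PiE_def extensional_def)
  qed auto
  then have "card {f :: 'a \<Rightarrow> bit. \<forall>x. x \<notin> A \<longrightarrow> f x = 0} = card (PiE A (\<lambda>_. (UNIV :: bit set)))"
    by (rule bij_betw_same_card)
  also have "\<dots> = 2 ^ card A"
  proof -
    have "(UNIV :: bit set) = {0, 1}" by (auto intro: bit.exhaust)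
    then have "card (UNIV :: bit set) = 2" by (metis card_2_iff zero_neq_one)
    then show ?thesis using assms by (simp add: card_PiE)
  qed
  finally show ?thesis .
qed

lemma card_chU:
  assumes "finite U"
  shows "card (chU U k) = 2 ^ (card U choose k)"
proof -
  have "chU U k = {f :: nat set \<Rightarrow> bit. \<forall>x. x \<notin> {S. S \<subseteq> U \<and> card S = k} \<longrightarrow> f x = 0}"
    unfolding chU_def by fastforce
  moreover have "finite {S. S \<subseteq> U \<and> card S = k}"
    by (rule finite_subset[of _ "Pow U"]) (use assms in auto)
  ultimately show ?thesis using card_supp[of "{S. S \<subseteq> U \<and> card S = k}"] n_subsets[OF assms, of k] by simp
qed


lemma bd_eq_up:
  assumes k: "k \<ge> 2" and f: "f \<in> chU {1..2*m} k"
  shows "bd m k f G = up {1..2*m} 2 f G"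
proof -
  let ?U = "{1..2*m::nat}"
  have bb: "bd_basis k D G = (if G \<subseteq> D \<and> card G = k - 2 then 1 else 0)" if "finite D" for D
  proof -
    have fin: "finite {G. G \<subseteq> D \<and> card G = k - 2}"
      by (rule finite_subset[of _ "Pow D"]) (use that in auto)
    have "bd_basis k D G = (\<Sum>G'\<in>{G. G \<subseteq> D \<and> card G = k - 2}. basis_el G' G)"
      using k by (simp add: bd_basis_def sum_fun_apply)
    also have "\<dots> = (\<Sum>G'\<in>{G. G \<subseteq> D \<and> card G = k - 2}. if G = G' then 1 else 0)"
      by (simp add: basis_el_def)
    also have "\<dots> = (if G \<subseteq> D \<and> card G = k - 2 then 1 else 0)"
      using fin by (simp add: sum.delta)
    finally show ?thesis .
  qed
  have "bd m k f G = (\<Sum>D\<in>ksubsets m k. f D * bd_basis k D G)"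
    by (simp add: bd_def sum_fun_apply scaleZ2_def)
  also have "\<dots> = (\<Sum>D\<in>ksubsets m k. if G \<subseteq> D \<and> card G = k - 2 then f D else 0)"
  proof (rule sum.cong[OF refl])
    fix D assume "D \<in> ksubsets m k"
    then have "finite D" unfolding ksubsets_def using finite_subset by blast
    then show "f D * bd_basis k D G = (if G \<subseteq> D \<and> card G = k - 2 then f D else 0)"
      by (simp add: bb)
  qed
  also have "\<dots> = up ?U 2 f G"
  proof (cases "card G + 2 = k")
    case True
    have eqs: "{D \<in> ksubsets m k. G \<subseteq> D} = upS ?U 2 G"
      unfolding ksubsets_def upS_def using True by auto
    have fin: "finite (ksubsets m k)"
      unfolding ksubsets_def by (rule finite_subset[of _ "Pow ?U"]) auto
    have "(\<Sum>D\<in>ksubsets m k. if G \<subseteq> D \<and> card G = k - 2 then f D else 0) = (\<Sum>D\<in>ksubsets m k. if G \<subseteq> D then f D else 0)"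
      using True by (intro sum.cong) auto
    also have "\<dots> = sum f {D \<in> ksubsets m k. G \<subseteq> D}" by (rule sum.inter_filter[OF fin, symmetric])
    finally show ?thesis unfolding up_def eqs .
  next
    case False
    have "up ?U 2 f G = 0"
    proof (rule ccontr)
      assume "up ?U 2 f G \<noteq> 0"
      then have "card G + 2 = k" using up_card[of f k ?U 2 G] f unfolding chU_def by blast
      then show False using False by simp
    qed
    moreover have "card G \<noteq> k - 2" using False k by arith
    ultimately show ?thesis by simp
  qed
  finally show ?thesis .
qed

lemma ker_bd_eq:
  assumes k: "k \<ge> 2"
  shows "ker_bd m k = KU {1..2*m} k"
proof -
  have ch: "chains m k = chU {1..2*m} k"
    unfolding chains_def chU_def ksubsets_def by auto
  show ?thesis
    unfolding ker_bd_def KU_def ch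
    using bd_eq_up[OF k] by (auto simp: fun_eq_iff)
qed

lemma subspace_KU: "Z.subspace (KU U k)"
  unfolding Z.subspace_def
proof (intro conjI ballI allI)
  show z: "0 \<in> KU U k" unfolding KU_def chU_def by simp
next
  fix x y assume x: "x \<in> KU U k" and y: "y \<in> KU U k"
  have "(x + y) \<in> chU U k" using x y bit_sum_ne unfolding KU_def chU_def plus_fun_apply by blast
  moreover have "up U 2 (x + y) = 0" using x y by (simp add: KU_def up_add)
  ultimately show "x + y \<in> KU U k" unfolding KU_def by simp
next
  fix c x assume x: "x \<in> KU U k"
  have "scaleZ2 c x = (if c = 0 then 0 else x)"
    by (cases c) (auto simp: scaleZ2_def fun_eq_iff)
  then show "scaleZ2 c x \<in> KU U k" using x by (simp add: KU_def chU_def)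
qed

lemma finite_KU: "finite U \<Longrightarrow> finite (KU U k)"
proof -
  assume U: "finite U"
  have "finite (chU U k)" using card_chU[OF U, of k] by (metis card.infinite power_not_zero zero_neq_numeral)
  then show ?thesis by (rule finite_subset[rotated]) (auto simp: KU_def)
qed

fun e :: "nat \<Rightarrow> nat" where
  "e 0 = 0"
| "e (Suc n) = ((2*n) choose (n+2)) + 2 * e n"

lemma card_KU_e: "card (KU {1..2*n} (n+1)) = 2 ^ e n"
proof (induction n)
  case 0
  have "KU {1..2*0} (0+1) = {0}"
  proof -
    have "f = 0" if "f \<in> KU {} 1" for f
    proof
      fix S
      show "f S = 0 S"
      proof (rule ccontr)
        assume "f S \<noteq> 0 S"
        then have "S = {} \<and> card S = 1" using that unfolding KU_def chU_def by auto
        then show False by auto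
      qed
    qed
    then have "KU {} 1 \<subseteq> {0}" by auto
    moreover have "0 \<in> KU {} 1" unfolding KU_def chU_def by simp
    ultimately show ?thesis by auto
  qed
  then show ?case by simp
next
  case (Suc n)
  let ?U = "{1..2*n}"
  have U2: "{1..2 * Suc n} = insert (2*n+1) (insert (2*n+2) ?U)" by auto
  have "card (KU (insert (2*n+1) (insert (2*n+2) ?U)) (n+2)) = card (chU ?U (n+2)) * (card (KU ?U (n+2-1)) * card (KU ?U (n+2-1)))"
    by (rule card_step) auto
  then have "card (KU {1..2 * Suc n} (Suc n + 1)) = card (chU ?U (n+2)) * (card (KU ?U (n+2-1)) * card (KU ?U (n+2-1)))"
    unfolding U2 by simp
  also have "\<dots> = 2 ^ ((2*n) choose (n+2)) * (2 ^ e n * 2 ^ e n)"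
    using Suc.IH card_chU[of ?U "n+2"] by simp
  also have "\<dots> = 2 ^ e (Suc n)" by (simp add: power_add mult_2)
  finally show ?case .
qed

lemma dim_KU: "Z.dim (KU {1..2*n} (n+1)) = e n"
proof -
  have "(2::nat) ^ Z.dim (KU {1..2*n} (n+1)) = 2 ^ e n"
    using card_subspace_Z[OF subspace_KU finite_KU] card_KU_e by simp
  then show ?thesis by simp
qed

lemma e_formula: "e (Suc n) + (\<Sum>i = 0..n. 2 ^ (n - i) * ((2*i) choose i)) = (2 * Suc n) choose (Suc n + 1)"
proof (induction n)
  case 0 then show ?case by (simp add: numeral_2_eq_2)
next
  case (Suc n)
  have s: "(\<Sum>i = 0..Suc n. 2 ^ (Suc n - i) * ((2*i) choose i)) = 2 * (\<Sum>i = 0..n. 2 ^ (n - i) * ((2*i) choose i)) + ((2 * Suc n) choose Suc n)"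
  proof -
    have "(\<Sum>i = 0..n. 2 ^ (Suc n - i) * ((2*i) choose i)) = (\<Sum>i = 0..n. 2 * (2 ^ (n - i) * ((2*i) choose i)))"
      by (rule sum.cong) (auto simp: Suc_diff_le)
    then show ?thesis by (simp add: sum_distrib_left)
  qed
  have p1: "(2 * Suc (Suc n)) choose (Suc (Suc n) + 1) = ((2*Suc n) choose (Suc n + 2)) + 2 * ((2*Suc n) choose (Suc n + 1)) + ((2 * Suc n) choose Suc n)"
  proof -
    have a: "2 * Suc (Suc n) = Suc (Suc (2 * Suc n))" by simp
    have b: "Suc (Suc n) + 1 = Suc (Suc (Suc n))" by simp
    show ?thesis unfolding a b by (simp add: binomial_Suc_Suc)
  qed
  have e2: "e (Suc (Suc n)) = ((2*Suc n) choose (Suc n + 2)) + 2 * e (Suc n)" by (simp only: e.simps)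
  from e2 s p1 Suc.IH show ?case by linarith
qed

theorem mainTheorem7:
  fixes m :: nat
  assumes "m \<ge> 1"
  shows "int (vector_space.dim scaleZ2 (ker_bd m (m + 1))) =
    int ((2*m) choose (m - 1)) - (\<Sum>i = 0..m-1. 2 ^ (m - 1 - i) * int ((2*i) choose i))"
proof -
  obtain n where m: "m = Suc n" using assms by (cases m) auto
  have "ker_bd m (m + 1) = KU {1..2*m} (m+1)" by (rule ker_bd_eq) (simp add: m)
  then have d: "vector_space.dim scaleZ2 (ker_bd m (m + 1)) = e m" using dim_KU[of m] by simp
  have sym: "(2*m) choose (m - 1) = (2 * Suc n) choose (Suc n + 1)"
  proof -
    have "(2 * Suc n) choose (Suc n + 1) = (2 * Suc n) choose (2 * Suc n - (Suc n + 1))"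
      by (rule binomial_symmetric) simp
    also have "2 * Suc n - (Suc n + 1) = m - 1" using m by simp
    finally show ?thesis using m by simp
  qed
  have sm: "(\<Sum>i = 0..m-1. 2 ^ (m - 1 - i) * int ((2*i) choose i)) = int (\<Sum>i = 0..n. 2 ^ (n - i) * ((2*i) choose i))"
    using m by (simp add: of_nat_sum)
  have ef: "e m + (\<Sum>i = 0..n. 2 ^ (n - i) * ((2*i) choose i)) = (2 * Suc n) choose (Suc n + 1)"
    using e_formula[of n] m by simp
  show ?thesis unfolding d sym sm using arg_cong[OF ef, of int] by linarith
qed

end
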